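(* Let $\operatorname{Erf}(\xi)=\int_0^\xi e^{-x^2}\,dx$ and $n,m\in\mathbb{N}_0$. There are polynomials $p^*_{n,m},q^*_{n,m}\in\mathbb{Q}[x,y]$ with \[ \iint x^ny^m(x-y)e^{-(x-y)^2}\,dx\,dy=p^*_{n,m}(x,y)e^{-(x-y)^2}+q^*_{n,m}(x,y)\operatorname{Erf}(x-y) \] (i.e. $\partial_x\partial_y$ of the right-hand side equals $x^ny^m(x-y)e^{-(x-y)^2}$), such that $p^*_{n,m}$ has degree $n+m-1$ and $q^*_{n,m}$ has degree $n+m$.
   Context: A polynomial of negative degree means the zero polynomial. *)

theory Defs
  imports "HOL-Analysis.Analysis"
begin

text \<open>Bivariate polynomials over the rationals, represented by their coefficient
  function (coefficient of x^i y^j at (i,j)); a genuine polynomial has finite support.\<close>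
type_synonym bipoly = "nat \<times> nat \<Rightarrow> rat"

definition bipoly :: "bipoly \<Rightarrow> bool" where
  "bipoly p \<longleftrightarrow> finite {ij. p ij \<noteq> 0}"

definition bipoly_eval :: "bipoly \<Rightarrow> real \<Rightarrow> real \<Rightarrow> real" where
  "bipoly_eval p x y = (\<Sum>ij\<in>{ij. p ij \<noteq> 0}. of_rat (p ij) * x ^ fst ij * y ^ snd ij)"

definition tdeg :: "bipoly \<Rightarrow> int" where
  "tdeg p = (if (\<forall>ij. p ij = 0) then -1 else int (Max {fst ij + snd ij | ij. p ij \<noteq> 0}))"

definition Erf :: "real \<Rightarrow> real" where
  "Erf \<xi> = (LBINT x=ereal 0..ereal \<xi>. exp (- (x^2)))"

end

theory Submission
  imports Defs
begin

definition dle :: "bipoly \<Rightarrow> int \<Rightarrow> bool" where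
  "dle p d \<longleftrightarrow> (\<forall>i j. p (i,j) \<noteq> 0 \<longrightarrow> int (i+j) \<le> d)"
definition dxp :: "bipoly \<Rightarrow> bipoly" where
  "dxp p = (\<lambda>(i,j). of_nat (Suc i) * p (Suc i, j))"
definition dyp :: "bipoly \<Rightarrow> bipoly" where
  "dyp p = (\<lambda>(i,j). of_nat (Suc j) * p (i, Suc j))"
definition sw :: "bipoly \<Rightarrow> bipoly" where
  "sw p = (\<lambda>(i,j). p (j,i))"
definition mx :: "bipoly \<Rightarrow> bipoly" where
  "mx p = (\<lambda>(i,j). if i = 0 then 0 else p (i - 1, j))"
definition my :: "bipoly \<Rightarrow> bipoly" where
  "my p = (\<lambda>(i,j). if j = 0 then 0 else p (i, j - 1))"
definition tm :: "bipoly \<Rightarrow> bipoly" where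
  "tm p = (\<lambda>ij. mx p ij - my p ij)"

lemma E_superset:
  assumes "finite A" "{ij. p ij \<noteq> 0} \<subseteq> A"
  shows "bipoly_eval p x y = (\<Sum>ij\<in>A. of_rat (p ij) * x ^ fst ij * y ^ snd ij)"
  unfolding bipoly_eval_def
  by (rule sum.mono_neutral_left) (use assms in auto)

lemma bipoly_add: "bipoly p \<Longrightarrow> bipoly q \<Longrightarrow> bipoly (\<lambda>ij. p ij + q ij)"
  unfolding bipoly_def
  by (rule finite_subset[of _ "{ij. p ij \<noteq> 0} \<union> {ij. q ij \<noteq> 0}"]) auto

lemma bipoly_smult: "bipoly p \<Longrightarrow> bipoly (\<lambda>ij. r * p ij)"
  unfolding bipoly_def
  by (rule finite_subset[of _ "{ij. p ij \<noteq> 0}"]) auto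

lemma E_add:
  assumes "bipoly p" "bipoly q"
  shows "bipoly_eval (\<lambda>ij. p ij + q ij) x y = bipoly_eval p x y + bipoly_eval q x y"
proof -
  let ?A = "{ij. p ij \<noteq> 0} \<union> {ij. q ij \<noteq> 0}"
  have f: "finite ?A" using assms by (auto simp: bipoly_def)
  show ?thesis
    apply (subst (1 2 3) E_superset[OF f])
    by (auto simp: of_rat_add distrib_right sum.distrib)
qed

lemma E_smult:
  assumes "bipoly p"
  shows "bipoly_eval (\<lambda>ij. r * p ij) x y = of_rat r * bipoly_eval p x y"
proof -
  let ?A = "{ij. p ij \<noteq> 0}"
  have f: "finite ?A" using assms by (auto simp: bipoly_def)
  show ?thesis
    apply (subst (1 2) E_superset[OF f])
    by (auto simp: of_rat_mult sum_distrib_left mult.assoc)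
qed

lemma sw_image: "{ij. sw p ij \<noteq> 0} = (\<lambda>(i,j). (j,i)) ` {ij. p ij \<noteq> 0}"
  by (auto simp: sw_def image_iff)

lemma bipoly_sw: "bipoly p \<Longrightarrow> bipoly (sw p)"
  unfolding bipoly_def sw_image by simp

lemma E_sw:
  assumes "bipoly p"
  shows "bipoly_eval (sw p) x y = bipoly_eval p y x"
proof -
  have inj: "inj_on (\<lambda>(i::nat,j::nat). (j,i)) A" for A by (auto simp: inj_on_def)
  show ?thesis
    unfolding bipoly_eval_def sw_image
    by (subst sum.reindex[OF inj]) (auto simp: sw_def mult_ac intro!: sum.cong)
qed

lemma bipoly_mx: "bipoly p \<Longrightarrow> bipoly (mx p)"
  unfolding bipoly_def
  by (rule finite_subset[of _ "(\<lambda>(i,j). (Suc i, j)) ` {ij. p ij \<noteq> 0}"])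
     (auto simp: mx_def image_iff split: if_splits intro!: exI[of _ "_ - 1"])

lemma E_mx:
  assumes "bipoly p"
  shows "bipoly_eval (mx p) x y = x * bipoly_eval p x y"
proof -
  let ?S = "{ij. p ij \<noteq> 0}"
  let ?A = "(\<lambda>(i,j). (Suc i, j)) ` ?S"
  have f: "finite ?A" using assms by (auto simp: bipoly_def)
  have sub: "{ij. mx p ij \<noteq> 0} \<subseteq> ?A"
    by (auto simp: mx_def image_iff split: if_splits intro!: exI[of _ "_ - 1"])
  have inj: "inj_on (\<lambda>(i::nat,j::nat). (Suc i,j)) A" for A by (auto simp: inj_on_def)
  show ?thesis
    apply (subst E_superset[OF f sub])
    apply (subst sum.reindex[OF inj])
    by (auto simp: mx_def bipoly_eval_def sum_distrib_left mult_ac intro!: sum.cong)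
qed

lemma my_sw: "my p = sw (mx (sw p))"
  by (auto simp: my_def mx_def sw_def fun_eq_iff)

lemma dyp_sw: "dyp p = sw (dxp (sw p))"
  by (auto simp: dyp_def dxp_def sw_def fun_eq_iff)

lemma bipoly_my: "bipoly p \<Longrightarrow> bipoly (my p)"
  by (simp add: my_sw bipoly_sw bipoly_mx)

lemma E_my:
  assumes "bipoly p"
  shows "bipoly_eval (my p) x y = y * bipoly_eval p x y"
  using assms by (simp add: my_sw E_sw bipoly_sw bipoly_mx E_mx)

lemma bipoly_dxp: "bipoly p \<Longrightarrow> bipoly (dxp p)"
  unfolding bipoly_def
  by (rule finite_subset[of _ "(\<lambda>(i,j). (i - 1, j)) ` {ij. p ij \<noteq> 0}"])
     (auto simp: dxp_def image_iff intro!: exI[of _ "Suc _"])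

lemma E_dxp:
  assumes "bipoly p"
  shows "((\<lambda>x. bipoly_eval p x y) has_real_derivative bipoly_eval (dxp p) x y) (at x)"
proof -
  let ?S = "{ij. p ij \<noteq> 0}"
  let ?S' = "?S \<inter> {ij. fst ij > 0}"
  let ?A = "(\<lambda>(i,j). (i - 1, j)) ` ?S'"
  have fS: "finite ?S" using assms by (auto simp: bipoly_def)
  have f: "finite ?A" using fS by auto
  have sub: "{ij. dxp p ij \<noteq> 0} \<subseteq> ?A"
    apply (clarsimp simp: dxp_def image_iff)
    subgoal for a b by (rule bexI[of _ "(Suc a, b)"]) auto
    done
  have inj: "inj_on (\<lambda>(i::nat,j::nat). (i - 1,j)) ?S'" by (auto simp: inj_on_def)
  have "bipoly_eval (dxp p) x y = (\<Sum>ij\<in>?S'. of_rat (dxp p (fst ij - 1, snd ij)) * x ^ (fst ij - 1) * y ^ snd ij)"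
    apply (subst E_superset[OF f sub])
    apply (subst sum.reindex[OF inj])
    by (auto intro!: sum.cong)
  also have "\<dots> = (\<Sum>ij\<in>?S'. of_rat (p ij) * (of_nat (fst ij) * x ^ (fst ij - 1)) * y ^ snd ij)"
    by (auto simp: dxp_def of_rat_mult mult_ac intro!: sum.cong)
  also have "\<dots> = (\<Sum>ij\<in>?S. of_rat (p ij) * (of_nat (fst ij) * x ^ (fst ij - 1)) * y ^ snd ij)"
    by (rule sum.mono_neutral_left) (use fS in auto)
  finally have eq: "bipoly_eval (dxp p) x y = \<dots>" .
  have "((\<lambda>x. \<Sum>ij\<in>?S. of_rat (p ij) * x ^ fst ij * y ^ snd ij) has_real_derivative
      (\<Sum>ij\<in>?S. of_rat (p ij) * (of_nat (fst ij) * x ^ (fst ij - 1)) * y ^ snd ij)) (at x)"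
    by (intro DERIV_sum DERIV_cmult_right DERIV_cmult) (metis DERIV_pow One_nat_def)
  then show ?thesis by (subst eq) (simp only: bipoly_eval_def)
qed

lemma bipoly_dyp: "bipoly p \<Longrightarrow> bipoly (dyp p)"
  by (simp add: dyp_sw bipoly_sw bipoly_dxp)

lemma E_dyp:
  assumes "bipoly p"
  shows "((\<lambda>y. bipoly_eval p x y) has_real_derivative bipoly_eval (dyp p) x y) (at y)"
proof -
  have "((\<lambda>y. bipoly_eval (sw p) y x) has_real_derivative bipoly_eval (dxp (sw p)) y x) (at y)"
    by (rule E_dxp) (simp add: assms bipoly_sw)
  then show ?thesis
    using assms by (simp add: dyp_sw E_sw bipoly_sw bipoly_dxp)
qed

lemma Erf_deriv: "(Erf has_real_derivative exp (- (\<xi>^2))) (at \<xi>)"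
proof -
  define a where "a = min \<xi> 0 - 1"
  define b where "b = max \<xi> 0 + 1"
  have c: "continuous_on {a..b} (\<lambda>x::real. exp (- (x^2)))"
    by (intro continuous_intros)
  have "((\<lambda>u. LBINT y=ereal 0..ereal u. exp (- (y^2))) has_vector_derivative exp (- (\<xi>^2))) (at \<xi> within {a..b})"
    by (rule interval_integral_FTC2[of a 0 b]) (use c in \<open>auto simp: a_def b_def\<close>)
  then have "((\<lambda>u. LBINT y=ereal 0..ereal u. exp (- (y^2))) has_vector_derivative exp (- (\<xi>^2))) (at \<xi> within {a<..<b})"
    by (rule has_vector_derivative_within_subset) auto
  then have "((\<lambda>u. LBINT y=ereal 0..ereal u. exp (- (y^2))) has_vector_derivative exp (- (\<xi>^2))) (at \<xi>)"
    by (subst (asm) has_vector_derivative_within_open) (auto simp: a_def b_def)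
  then show ?thesis
    unfolding Erf_def[abs_def] by (simp add: has_real_derivative_iff_has_vector_derivative)
qed

lemma bipoly_diff: "bipoly p \<Longrightarrow> bipoly q \<Longrightarrow> bipoly (\<lambda>ij. p ij - q ij)"
  unfolding bipoly_def
  by (rule finite_subset[of _ "{ij. p ij \<noteq> 0} \<union> {ij. q ij \<noteq> 0}"]) auto

lemma E_diff:
  assumes "bipoly p" "bipoly q"
  shows "bipoly_eval (\<lambda>ij. p ij - q ij) x y = bipoly_eval p x y - bipoly_eval q x y"
proof -
  have "bipoly_eval (\<lambda>ij. p ij + (-1) * q ij) x y = bipoly_eval p x y + bipoly_eval (\<lambda>ij. (-1) * q ij) x y"
    by (rule E_add[OF assms(1) bipoly_smult[OF assms(2)]])
  then show ?thesis using E_smult[OF assms(2), of "-1" x y] by simp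
qed

lemma bipoly_tm: "bipoly p \<Longrightarrow> bipoly (tm p)"
  unfolding tm_def by (intro bipoly_diff bipoly_mx bipoly_my)

lemma E_tm: "bipoly p \<Longrightarrow> bipoly_eval (tm p) x y = (x - y) * bipoly_eval p x y"
  unfolding tm_def
  by (subst E_diff) (auto simp: bipoly_mx bipoly_my E_mx E_my algebra_simps)

lemma E_comb:
  assumes "bipoly A" "bipoly B" "bipoly C"
  shows "bipoly_eval (\<lambda>ij. A ij + r * B ij - C ij) x y
     = bipoly_eval A x y + of_rat r * bipoly_eval B x y - bipoly_eval C x y"
  using assms
  by (simp add: E_diff E_add E_smult bipoly_add bipoly_smult)

lemma DER:
  fixes P Q R c :: bipoly
  assumes bP: "bipoly P" and bQ: "bipoly Q"
   and a: "(\<lambda>ij. dyp P ij + 2 * tm P ij - Q ij) = R"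
   and b: "(\<lambda>ij. dxp R ij + (-2) * tm R ij + dyp Q ij) = c"
   and z: "dxp (dyp Q) = (\<lambda>_. 0)"
  shows "\<exists>G :: real \<Rightarrow> real \<Rightarrow> real.
              (\<forall>x y. ((\<lambda>y. bipoly_eval P x y * exp (- ((x - y)^2)) + bipoly_eval Q x y * Erf (x - y))
                        has_real_derivative G x y) (at y)) \<and>
              (\<forall>x y. ((\<lambda>x. G x y) has_real_derivative
                        bipoly_eval c x y * exp (- ((x - y)^2))) (at x))"
proof -
  have bR: "bipoly R" unfolding a[symmetric]
    by (intro bipoly_diff bipoly_add bipoly_smult bipoly_dyp bipoly_tm bP bQ)
  have bdQ: "bipoly (dyp Q)" by (rule bipoly_dyp[OF bQ])
  have ER: "bipoly_eval R x y = bipoly_eval (dyp P) x y + 2 * (x - y) * bipoly_eval P x y - bipoly_eval Q x y" for x y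
    unfolding a[symmetric]
    by (subst E_comb) (auto simp: bipoly_dyp bipoly_tm bP bQ E_tm)
  have Ec: "bipoly_eval c x y = bipoly_eval (dxp R) x y - 2 * (x - y) * bipoly_eval R x y + bipoly_eval (dyp Q) x y" for x y
  proof -
    have "bipoly_eval c x y = bipoly_eval (\<lambda>ij. dxp R ij + (-2) * tm R ij) x y + bipoly_eval (dyp Q) x y"
      unfolding b[symmetric]
      by (rule E_add[OF _ bdQ]) (rule bipoly_add[OF bipoly_dxp[OF bR] bipoly_smult[OF bipoly_tm[OF bR]]])
    moreover have "bipoly_eval (\<lambda>ij. dxp R ij + (-2) * tm R ij) x y = bipoly_eval (dxp R) x y + bipoly_eval (\<lambda>ij. (-2) * tm R ij) x y"
      by (rule E_add[OF bipoly_dxp[OF bR] bipoly_smult[OF bipoly_tm[OF bR]]])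
    moreover have "bipoly_eval (\<lambda>ij. (-2) * tm R ij) x y = of_rat (-2) * bipoly_eval (tm R) x y"
      by (rule E_smult[OF bipoly_tm[OF bR]])
    ultimately show ?thesis
      by (simp add: E_tm[OF bR])
  qed
  have EddQ: "bipoly_eval (dxp (dyp Q)) x y = 0" for x y
    unfolding z by (simp add: bipoly_eval_def)
  define G where "G x y = bipoly_eval R x y * exp (- ((x - y)^2)) + bipoly_eval (dyp Q) x y * Erf (x - y)" for x y
  have dEy: "((\<lambda>y. exp (- ((x - y)^2))) has_real_derivative exp (- ((x - y)^2)) * (2 * (x - y))) (at y)" for x y :: real
    by (auto intro!: derivative_eq_intros simp: algebra_simps)
  have dEx: "((\<lambda>x. exp (- ((x - y)^2))) has_real_derivative exp (- ((x - y)^2)) * (- 2 * (x - y))) (at x)" for x y :: real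
    by (auto intro!: derivative_eq_intros simp: algebra_simps)
  have dFy: "((\<lambda>y. Erf (x - y)) has_real_derivative exp (- ((x - y)^2)) * (-1)) (at y)" for x y :: real
    by (rule DERIV_chain2[OF Erf_deriv]) (auto intro!: derivative_eq_intros)
  have dFx: "((\<lambda>x. Erf (x - y)) has_real_derivative exp (- ((x - y)^2)) * 1) (at x)" for x y :: real
    by (rule DERIV_chain2[OF Erf_deriv]) (auto intro!: derivative_eq_intros)
  show ?thesis
  proof (intro exI[of _ G] conjI allI)
    fix x y :: real
    show "((\<lambda>y. bipoly_eval P x y * exp (- ((x - y)^2)) + bipoly_eval Q x y * Erf (x - y))
                        has_real_derivative G x y) (at y)"
      apply (rule DERIV_cong)
       apply (rule DERIV_add[OF DERIV_mult[OF E_dyp[OF bP] dEy] DERIV_mult[OF E_dyp[OF bQ] dFy]])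
      by (simp add: G_def ER algebra_simps)
    show "((\<lambda>x. G x y) has_real_derivative bipoly_eval c x y * exp (- ((x - y)^2))) (at x)"
      unfolding G_def[abs_def]
      apply (rule DERIV_cong)
       apply (rule DERIV_add[OF DERIV_mult[OF E_dxp[OF bR] dEx] DERIV_mult[OF E_dxp[OF bdQ] dFx]])
      by (simp add: Ec EddQ algebra_simps)
  qed
qed

definition L1 :: "bipoly \<Rightarrow> bipoly \<Rightarrow> bipoly" where
  "L1 R \<beta> = (\<lambda>ij. dxp R ij + (-2) * tm R ij + \<beta> ij)"
definition yonly :: "bipoly \<Rightarrow> bool" where
  "yonly \<beta> \<longleftrightarrow> (\<forall>i j. 0 < i \<longrightarrow> \<beta> (i,j) = 0)"
definition sig :: "nat \<Rightarrow> bipoly \<Rightarrow> rat" where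
  "sig d p = (\<Sum>i\<le>d. p (i, d - i))"
definition mono :: "nat \<Rightarrow> nat \<Rightarrow> rat \<Rightarrow> bipoly" where
  "mono a b r = (\<lambda>(i,j). if i = a \<and> j = b then r else 0)"

lemma dxp_add: "dxp (\<lambda>ij. p ij + q ij) = (\<lambda>ij. dxp p ij + dxp q ij)"
  by (auto simp: dxp_def fun_eq_iff algebra_simps)
lemma tm_add: "tm (\<lambda>ij. p ij + q ij) = (\<lambda>ij. tm p ij + tm q ij)"
  by (auto simp: tm_def mx_def my_def fun_eq_iff algebra_simps)
lemma L1_add: "L1 (\<lambda>ij. R ij + R' ij) (\<lambda>ij. b ij + b' ij) = (\<lambda>ij. L1 R b ij + L1 R' b' ij)"
  by (auto simp: L1_def dxp_add tm_add fun_eq_iff algebra_simps)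
lemma L1_zero: "L1 (\<lambda>_. 0) b = b"
  by (auto simp: L1_def dxp_def tm_def mx_def my_def fun_eq_iff)

lemma S1:
  fixes d :: nat
  shows "dle c (int d) \<Longrightarrow> \<exists>R \<beta>. dle R (int d - 1) \<and> dle \<beta> (int d) \<and> yonly \<beta> \<and> L1 R \<beta> = c \<and> \<beta> (0,d) = sig d c"
proof (induction d arbitrary: c)
  case 0
  show ?case
  proof (intro exI conjI)
    show "dle (\<lambda>_. 0) (int 0 - 1)" by (simp add: dle_def)
    show "dle c (int 0)" by fact
    show "yonly c" using 0 unfolding yonly_def dle_def by force
    show "L1 (\<lambda>_. 0) c = c" by (rule L1_zero)
    show "c (0, 0) = sig 0 c" by (simp add: sig_def)
  qed
next
  case (Suc d)
  define s where "s = sig (Suc d) c"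
  define g where "g i = ((if i = 0 then s else 0) - c (i, Suc d - i)) / 2" for i
  define q where "q = (\<lambda>(i,j). if i + j = d then - (\<Sum>k\<le>i. g k) else 0)"
  have gsum: "(\<Sum>k\<le>Suc d. g k) = 0"
    unfolding g_def sum_divide_distrib[symmetric] sum_subtractf
    by (simp add: s_def sig_def)
  have K1: "tm q (i,j) = g i" if "i + j = Suc d" for i j
  proof (cases i)
    case 0
    then show ?thesis using that by (simp add: tm_def mx_def my_def q_def)
  next
    case (Suc i')
    show ?thesis
    proof (cases j)
      case 0
      then have "i = Suc d" using that by simp
      then show ?thesis using gsum 0 by (simp add: tm_def mx_def my_def q_def Suc)
    next
      case (Suc j')
      then show ?thesis using that \<open>i = Suc i'\<close> by (simp add: tm_def mx_def my_def q_def)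
    qed
  qed
  have K2: "tm q (i,j) = 0" if "i + j \<noteq> Suc d" for i j
    using that by (auto simp: tm_def mx_def my_def q_def)
  have K3: "dxp q (i,j) = 0" if "i + j + 1 \<noteq> d" for i j
    using that by (auto simp: dxp_def q_def)
  define m where "m = mono 0 (Suc d) s"
  define c' where "c' = (\<lambda>ij. c ij - L1 q m ij)"
  have dc': "dle c' (int d)"
    unfolding dle_def
  proof (intro allI impI)
    fix i j assume nz: "c' (i,j) \<noteq> 0"
    show "int (i + j) \<le> int d"
    proof (rule ccontr)
      assume "\<not> int (i + j) \<le> int d"
      then have ge: "i + j \<ge> Suc d" by simp
      show False
      proof (cases "i + j = Suc d")
        case True
        then have jj: "Suc d - i = j" by simp
        show False using nz K1[OF True] K3[of i j] True
          by (auto simp: c'_def L1_def m_def mono_def g_def jj diff_divide_distrib split: if_splits)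
      next
        case False
        then have "c (i,j) = 0" using Suc.prems ge unfolding dle_def
          by (metis le_antisym not_less_eq_eq of_nat_Suc of_nat_le_iff)
        then show False using nz K2[OF False] K3[of i j] False ge
          by (auto simp: c'_def L1_def m_def mono_def split: if_splits)
      qed
    qed
  qed
  obtain R' \<beta>' where R': "dle R' (int d - 1)" "dle \<beta>' (int d)" "yonly \<beta>'" "L1 R' \<beta>' = c'" "\<beta>' (0,d) = sig d c'"
    using Suc.IH[OF dc'] by blast
  show ?case
  proof (intro exI conjI)
    show "dle (\<lambda>ij. R' ij + q ij) (int (Suc d) - 1)"
      using R'(1) unfolding dle_def q_def by (auto split: if_splits; smt (verit))
    show "dle (\<lambda>ij. \<beta>' ij + m ij) (int (Suc d))"
      using R'(2) unfolding dle_def m_def mono_def by (auto split: if_splits; smt (verit))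
    show "yonly (\<lambda>ij. \<beta>' ij + m ij)"
      using R'(3) by (auto simp: yonly_def m_def mono_def)
    show "L1 (\<lambda>ij. R' ij + q ij) (\<lambda>ij. \<beta>' ij + m ij) = c"
      unfolding L1_add R'(4) by (simp add: c'_def)
    have "\<beta>' (0, Suc d) = 0"
    proof (rule ccontr)
      assume "\<beta>' (0, Suc d) \<noteq> 0"
      then have "int (0 + Suc d) \<le> int d" using R'(2) unfolding dle_def by blast
      then show False by simp
    qed
    then show "\<beta>' (0, Suc d) + m (0, Suc d) = sig (Suc d) c"
      by (simp add: m_def mono_def s_def)
  qed
qed

definition L2 :: "bipoly \<Rightarrow> bipoly \<Rightarrow> bipoly" where
  "L2 P \<alpha> = (\<lambda>ij. dyp P ij + 2 * tm P ij - \<alpha> ij)"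
definition xonly :: "bipoly \<Rightarrow> bool" where
  "xonly \<alpha> \<longleftrightarrow> (\<forall>i j. 0 < j \<longrightarrow> \<alpha> (i,j) = 0)"

lemma sig_sw: "sig d (sw c) = sig d c"
  unfolding sig_def sw_def
  by (rule sum.reindex_bij_witness[where i="\<lambda>i. d - i" and j="\<lambda>i. d - i"]) auto

lemma dle_sw: "dle (sw c) d = dle c d"
  unfolding dle_def sw_def by (auto; metis add.commute)

lemma S2:
  fixes d :: nat
  assumes "dle c (int d)"
  shows "\<exists>P \<alpha>. dle P (int d - 1) \<and> dle \<alpha> (int d) \<and> xonly \<alpha> \<and> L2 P \<alpha> = c \<and> \<alpha> (d,0) = - sig d c"
proof -
  obtain R \<beta> where R: "dle R (int d - 1)" "dle \<beta> (int d)" "yonly \<beta>" "L1 R \<beta> = sw c" "\<beta> (0,d) = sig d (sw c)"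
    using S1[of "sw c" d] assms by (auto simp: dle_sw)
  show ?thesis
  proof (intro exI conjI)
    show "dle (sw R) (int d - 1)" using R(1) by (simp add: dle_sw)
    show "dle (\<lambda>ij. - sw \<beta> ij) (int d)" using R(2) unfolding dle_def sw_def by (auto; metis add.commute)
    show "xonly (\<lambda>ij. - sw \<beta> ij)" using R(3) by (auto simp: xonly_def yonly_def sw_def)
    show "(\<lambda>ij. - sw \<beta> ij) (d, 0) = - sig d c" using R(5) sig_sw[of d c] by (simp add: sw_def)
    show "L2 (sw R) (\<lambda>ij. - sw \<beta> ij) = c"
    proof
      fix ij :: "nat \<times> nat"
      obtain i j where ij: "ij = (i,j)" by fastforce
      have "L1 R \<beta> (j,i) = c (i,j)" using R(4) by (simp add: sw_def)
      then show "L2 (sw R) (\<lambda>ij. - sw \<beta> ij) ij = c ij"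
        by (auto simp: ij L1_def L2_def dyp_def dxp_def tm_def mx_def my_def sw_def algebra_simps split: if_splits)
    qed
  qed
qed

lemma dle_bipoly: assumes "dle p d" shows "bipoly p"
  unfolding bipoly_def
proof (rule finite_subset[of _ "{..nat d} \<times> {..nat d}"])
  show "{ij. p ij \<noteq> 0} \<subseteq> {..nat d} \<times> {..nat d}"
  proof
    fix ij assume "ij \<in> {ij. p ij \<noteq> 0}"
    moreover obtain i j where ij: "ij = (i,j)" by fastforce
    ultimately have "p (i,j) \<noteq> 0" by simp
    then have "int (i+j) \<le> d" using assms by (auto simp: dle_def)
    then have "int i \<le> d" "int j \<le> d" "0 \<le> d" by linarith+
    then show "ij \<in> {..nat d} \<times> {..nat d}" by (auto simp: le_nat_iff ij)
  qed
qed simp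

lemma tdeg_eq:
  assumes "dle p (int d)" "p (i,j) \<noteq> 0" "i + j = d"
  shows "tdeg p = int d"
proof -
  have fin: "finite {ij. p ij \<noteq> 0}" using dle_bipoly[OF assms(1)] by (simp add: bipoly_def)
  have "{fst ij + snd ij |ij. p ij \<noteq> 0} = (\<lambda>ij. fst ij + snd ij) ` {ij. p ij \<noteq> 0}" by blast
  then have fin2: "finite {fst ij + snd ij |ij. p ij \<noteq> 0}" using fin by simp
  have "Max {fst ij + snd ij |ij. p ij \<noteq> 0} = d"
  proof (rule Max_eqI[OF fin2])
    fix k assume "k \<in> {fst ij + snd ij |ij. p ij \<noteq> 0}"
    then show "k \<le> d" using assms(1) unfolding dle_def by force
  next
    show "d \<in> {fst ij + snd ij |ij. p ij \<noteq> 0}" using assms(2,3) by force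
  qed
  moreover have "\<not> (\<forall>ij. p ij = 0)" using assms(2) by blast
  ultimately show ?thesis by (simp add: tdeg_def)
qed

lemma E_mono: "bipoly_eval (mono a b r) x y = of_rat r * x ^ a * y ^ b"
  by (subst E_superset[of "{(a,b)}"]) (auto simp: mono_def split: if_splits)

lemma bipoly_mono: "bipoly (mono a b r)"
  unfolding bipoly_def by (rule finite_subset[of _ "{(a,b)}"]) (auto simp: mono_def split: if_splits)

lemma E_c: "bipoly_eval (tm (mono n m 1)) x y = x ^ n * y ^ m * (x - y)"
  by (simp add: E_tm bipoly_mono E_mono algebra_simps)

lemma core:
  fixes n m :: nat
  shows "\<exists>P Q R :: bipoly. bipoly P \<and> bipoly Q \<and> tdeg P = int (n + m) - 1 \<and> tdeg Q = int (n + m) \<and>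
     (\<lambda>ij. dyp P ij + 2 * tm P ij - Q ij) = R \<and>
     (\<lambda>ij. dxp R ij + (-2) * tm R ij + dyp Q ij) = tm (mono n m 1) \<and>
     dxp (dyp Q) = (\<lambda>_. 0)"
proof (cases "n + m = 0")
  case True
  then have n0: "n = 0" "m = 0" by auto
  define Q where "Q = mono 0 0 (1/2)"
  show ?thesis
  proof (intro exI conjI)
    show "bipoly (\<lambda>_. 0::rat)" by (simp add: bipoly_def)
    show "bipoly Q" by (simp add: Q_def bipoly_mono)
    show "tdeg (\<lambda>_. 0) = int (n + m) - 1" using True by (simp add: tdeg_def)
    show "tdeg Q = int (n + m)"
      using True by (intro tdeg_eq[of _ _ 0 0]) (auto simp: Q_def mono_def dle_def)
    show "(\<lambda>ij. dyp (\<lambda>_. 0) ij + 2 * tm (\<lambda>_. 0) ij - Q ij) = (\<lambda>ij. - Q ij)"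
      by (auto simp: fun_eq_iff dyp_def tm_def mx_def my_def)
    show "(\<lambda>ij. dxp (\<lambda>ij. - Q ij) ij + (-2) * tm (\<lambda>ij. - Q ij) ij + dyp Q ij) = tm (mono n m 1)"
      by (auto simp: fun_eq_iff n0 Q_def dxp_def dyp_def tm_def mx_def my_def mono_def)
    show "dxp (dyp Q) = (\<lambda>_. 0)"
      by (auto simp: fun_eq_iff Q_def dxp_def dyp_def mono_def)
  qed
next
  case False
  define N where "N = n + m"
  have N1: "N \<ge> 1" using False unfolding N_def by linarith
  define q0 where "q0 = mono n m (-1/2)"
  define c' where "c' = dxp (mono n m (1/2))"
  have c_split: "tm (mono n m 1) = (\<lambda>ij. L1 q0 (\<lambda>_. 0) ij + c' ij)"
    by (auto simp: fun_eq_iff q0_def c'_def L1_def dxp_def tm_def mx_def my_def mono_def)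
  have dc': "dle c' (int (N - 1))"
    by (auto simp: dle_def c'_def dxp_def mono_def N_def split: if_splits)
  obtain R' \<beta> where R': "dle R' (int (N - 1) - 1)" "dle \<beta> (int (N - 1))" "yonly \<beta>"
     "L1 R' \<beta> = c'" "\<beta> (0, N - 1) = sig (N - 1) c'"
    using S1[OF dc'] by blast
  have sigc': "sig (N - 1) c' = of_nat n / 2"
  proof -
    have "sig (N - 1) c' = (\<Sum>i\<le>N - 1. if i = n - 1 then (if n > 0 then of_nat n / 2 else 0) else 0)"
      unfolding sig_def
      by (rule sum.cong) (auto simp: c'_def dxp_def mono_def N_def)
    also have "\<dots> = of_nat n / 2" using N1 by (auto simp: N_def)
    finally show ?thesis .
  qed
  define R where "R = (\<lambda>ij. q0 ij + R' ij)"
  have LR: "L1 R \<beta> = tm (mono n m 1)"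
  proof -
    have "L1 (\<lambda>ij. q0 ij + R' ij) (\<lambda>ij. 0 + \<beta> ij) = (\<lambda>ij. L1 q0 (\<lambda>_. 0) ij + L1 R' \<beta> ij)"
      by (rule L1_add)
    then show ?thesis unfolding R_def c_split R'(4) by simp
  qed
  define b :: bipoly where "b = (\<lambda>(i,j). if i = 0 \<and> 0 < j then \<beta> (0, j - 1) / of_nat j else (0::rat))"
  have dyb: "dyp b = \<beta>"
  proof
    fix ij :: "nat \<times> nat"
    obtain i j where ij: "ij = (i,j)" by fastforce
    show "dyp b ij = \<beta> ij"
      using R'(3) unfolding ij by (auto simp: dyp_def b_def yonly_def)
  qed
  define c2 where "c2 = (\<lambda>ij. R ij + b ij)"
  have dc2: "dle c2 (int N)"
    unfolding dle_def
  proof (intro allI impI)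
    fix i j assume nz: "c2 (i,j) \<noteq> 0"
    show "int (i + j) \<le> int N"
    proof (cases "q0 (i,j) \<noteq> 0")
      case True then show ?thesis by (auto simp: q0_def mono_def N_def split: if_splits)
    next
      case F1: False
      show ?thesis
      proof (cases "R' (i,j) \<noteq> 0")
        case True then show ?thesis using R'(1) unfolding dle_def by force
      next
        case False
        then have "b (i,j) \<noteq> 0" using nz F1 by (simp add: c2_def R_def)
        then have "i = 0" "0 < j" "\<beta> (0, j - 1) \<noteq> 0" by (auto simp: b_def split: if_splits)
        then show ?thesis using R'(2) N1 unfolding dle_def by force
      qed
    qed
  qed
  obtain P \<alpha> where P: "dle P (int N - 1)" "dle \<alpha> (int N)" "xonly \<alpha>" "L2 P \<alpha> = c2"
     "\<alpha> (N, 0) = - sig N c2"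
    using S2[OF dc2] by blast
  define Q where "Q = (\<lambda>ij. \<alpha> ij + b ij)"
  have dyQ: "dyp Q = \<beta>"
  proof
    fix ij :: "nat \<times> nat"
    obtain i j where ij: "ij = (i,j)" by fastforce
    have "dyp Q (i,j) = dyp \<alpha> (i,j) + dyp b (i,j)" by (simp add: Q_def dyp_def algebra_simps)
    also have "dyp \<alpha> (i,j) = 0" using P(3) by (simp add: dyp_def xonly_def)
    finally show "dyp Q ij = \<beta> ij" by (simp add: ij dyb)
  qed
  have b0N: "b (0, N) = of_nat n / (2 * of_nat N)"
  proof -
    have "b (0,N) = \<beta> (0, N - 1) / of_nat N" using N1 by (simp add: b_def)
    also have "\<dots> = (of_nat n / 2) / of_nat N" by (simp only: R'(5) sigc')
    finally show ?thesis by simp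
  qed
  have dleQ: "dle Q (int N)"
    using P(2) dc2 unfolding dle_def Q_def
  proof (intro allI impI)
    fix i j assume "\<alpha> (i,j) + b (i,j) \<noteq> 0"
    then consider "\<alpha> (i,j) \<noteq> 0" | "b (i,j) \<noteq> 0" by force
    then show "int (i + j) \<le> int N"
    proof cases
      case 1 then show ?thesis using P(2) unfolding dle_def by blast
    next
      case 2
      then have "i = 0" "0 < j" "\<beta> (0, j - 1) \<noteq> 0" by (auto simp: b_def split: if_splits)
      then show ?thesis using R'(2) N1 unfolding dle_def by force
    qed
  qed
  have R'0: "R' (i, j) = 0" if "i + j \<ge> N - 1" for i j
    using R'(1) that N1 unfolding dle_def by force
  show ?thesis
  proof (intro exI conjI)
    show "bipoly P" by (rule dle_bipoly[OF P(1)])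
    show "bipoly Q" by (rule dle_bipoly[OF dleQ])
    show "(\<lambda>ij. dyp P ij + 2 * tm P ij - Q ij) = R"
    proof
      fix ij
      have "L2 P \<alpha> ij = c2 ij" using P(4) by simp
      then show "dyp P ij + 2 * tm P ij - Q ij = R ij"
        by (simp add: L2_def c2_def Q_def algebra_simps)
    qed
    show "(\<lambda>ij. dxp R ij + (-2) * tm R ij + dyp Q ij) = tm (mono n m 1)"
      using LR by (simp add: L1_def dyQ)
    show "dxp (dyp Q) = (\<lambda>_. 0)"
      using R'(3) by (auto simp: dyQ dxp_def yonly_def fun_eq_iff)
    show "tdeg Q = int (n + m)"
    proof (cases "n = 0")
      case False
      have "Q (0, N) \<noteq> 0"
        using P(3) N1 False by (simp add: Q_def b0N xonly_def)
      then show ?thesis using tdeg_eq[OF dleQ] by (simp add: N_def)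
    next
      case True
      have "sig N c2 = (\<Sum>i\<le>N. if i = 0 then -1/2 else 0)"
        unfolding sig_def
      proof (rule sum.cong[OF refl])
        fix i assume "i \<in> {..N}"
        then have "R' (i, N - i) = 0" by (intro R'0) auto
        then show "c2 (i, N - i) = (if i = 0 then -1/2 else 0)"
          using True b0N N_def by (auto simp: c2_def R_def q0_def mono_def b_def)
      qed
      then have "sig N c2 = -1/2" by simp
      then have "Q (N, 0) \<noteq> 0"
        using P(5) N1 by (simp add: Q_def b_def)
      then show ?thesis using tdeg_eq[OF dleQ] by (simp add: N_def)
    qed
    show "tdeg P = int (n + m) - 1"
    proof -
      have "L2 P \<alpha> (0, N) = c2 (0, N)" using P(4) by simp
      moreover have "dyp P (0, N) = 0"
        using P(1) unfolding dle_def dyp_def by force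
      moreover have "\<alpha> (0, N) = 0" using P(3) N1 by (simp add: xonly_def)
      moreover have "tm P (0, N) = - P (0, N - 1)" using N1 by (simp add: tm_def mx_def my_def)
      moreover have "c2 (0, N) \<noteq> 0"
      proof -
        have "R' (0, N) = 0" by (intro R'0) auto
        then have "c2 (0, N) = (if n = 0 then -1/2 else 0) + of_nat n / (2 * of_nat N)"
        proof -
          have q0N: "q0 (0,N) = (if n = 0 then -1/2 else 0)" using N_def by (auto simp: q0_def mono_def)
          show ?thesis using q0N b0N \<open>R' (0, N) = 0\<close> by (simp add: c2_def R_def)
        qed
        then show ?thesis using N1 by (cases "n = 0") (auto simp: N_def)
      qed
      ultimately have "P (0, N - 1) \<noteq> 0" by (auto simp: L2_def)
      moreover have "dle P (int (N - 1))" using P(1) N1 by (simp add: of_nat_diff)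
      ultimately show ?thesis using tdeg_eq[of P "N - 1" 0 "N - 1"] N1 by (simp add: N_def of_nat_diff)
    qed
  qed
qed

theorem lemma4:
  fixes n m :: nat
  shows "\<exists>p q :: bipoly. bipoly p \<and> bipoly q \<and>
           tdeg p = int (n + m) - 1 \<and> tdeg q = int (n + m) \<and>
           (\<exists>G :: real \<Rightarrow> real \<Rightarrow> real.
              (\<forall>x y. ((\<lambda>y. bipoly_eval p x y * exp (- ((x - y)^2)) + bipoly_eval q x y * Erf (x - y))
                        has_real_derivative G x y) (at y)) \<and>
              (\<forall>x y. ((\<lambda>x. G x y) has_real_derivative
                        x ^ n * y ^ m * (x - y) * exp (- ((x - y)^2))) (at x)))"
proof -
  obtain P Q R where H: "bipoly P" "bipoly Q" "tdeg P = int (n + m) - 1" "tdeg Q = int (n + m)"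
     "(\<lambda>ij. dyp P ij + 2 * tm P ij - Q ij) = R"
     "(\<lambda>ij. dxp R ij + (-2) * tm R ij + dyp Q ij) = tm (mono n m 1)"
     "dxp (dyp Q) = (\<lambda>_. 0)"
    using core[of n m] by blast
  from DER[OF H(1,2,5,6,7)] show ?thesis
    using H(1-4) unfolding E_c by blast
qed

end
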